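(* Let $(X,\mathcal{O}(X))$ be a measurable space, $\mathcal{A}$ a unital $C^*$-algebra and $\mathcal{H}$ a Hilbert space. Every spectral instrument $\mathcal{I}:\mathcal{O}(X)\to CP(\mathcal{A},\mathcal{B}(\mathcal{H}))$ is an extreme point of the convex set $I_{\mathcal{H}}(X,\mathcal{A})$.
   Context: A CP instrument is a map $\mathcal{I}$ from $\mathcal{O}(X)$ to the completely positive maps $\mathcal{A}\to\mathcal{B}(\mathcal{H})$ such that for all $a\in\mathcal{A}$, $h,k\in\mathcal{H}$, $A\mapsto\langle h,\mathcal{I}(A)(a)k\rangle$ is a countably additive complex measure. It is UCP if $\mathcal{I}(X)(1_\mathcal{A})=I_\mathcal{H}$; $I_{\mathcal{H}}(X,\mathcal{A})$ is the convex set of UCP instruments. It is spectral if it is UCP and $\mathcal{I}(A)$ is a $*$-homomorphism for every $A\in\mathcal{O}(X)$. *)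

theory Defs
  imports "HOL-Analysis.Analysis"
begin

locale complex_hilbert =
  fixes sH :: "complex \<Rightarrow> 'h::ab_group_add \<Rightarrow> 'h"
    and ip :: "'h \<Rightarrow> 'h \<Rightarrow> complex"
  assumes sH_add_right: "sH c (x + y) = sH c x + sH c y"
    and sH_add_left: "sH (c + d) x = sH c x + sH d x"
    and sH_assoc: "sH c (sH d x) = sH (c * d) x"
    and sH_one: "sH 1 x = x"
    and inner_add_right: "ip x (y + z) = ip x y + ip x z"
    and inner_smult_right: "ip x (sH c y) = c * ip x y"
    and inner_cnj_sym: "ip y x = cnj (ip x y)"
    and inner_self_nonneg: "0 \<le> Re (ip x x)"
    and inner_self_zero: "ip x x = 0 \<Longrightarrow> x = 0"
    and complete: "(\<forall>e>0. \<exists>N. \<forall>m\<ge>N. \<forall>n\<ge>N.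
                      sqrt (Re (ip (X m - X n) (X m - X n))) < e)
                   \<Longrightarrow> \<exists>L. (\<lambda>n. sqrt (Re (ip (X n - L) (X n - L)))) \<longlonglongrightarrow> 0"

definition hnorm :: "('h \<Rightarrow> 'h \<Rightarrow> complex) \<Rightarrow> 'h \<Rightarrow> real" where
  "hnorm ip x = sqrt (Re (ip x x))"

locale unital_cstar_algebra =
  fixes sA :: "complex \<Rightarrow> 'a::{ring, monoid_mult} \<Rightarrow> 'a"
    and star :: "'a \<Rightarrow> 'a"
    and anorm :: "'a \<Rightarrow> real"
  assumes sA_add_right: "sA c (x + y) = sA c x + sA c y"
    and sA_add_left: "sA (c + d) x = sA c x + sA d x"
    and sA_assoc: "sA c (sA d x) = sA (c * d) x"
    and sA_one: "sA 1 x = x"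
    and sA_mult_left: "sA c x * y = sA c (x * y)"
    and sA_mult_right: "x * sA c y = sA c (x * y)"
    and star_star: "star (star x) = x"
    and star_add: "star (x + y) = star x + star y"
    and star_mult: "star (x * y) = star y * star x"
    and star_smult: "star (sA c x) = sA (cnj c) (star x)"
    and anorm_nonneg: "0 \<le> anorm x"
    and anorm_zero: "anorm x = 0 \<longleftrightarrow> x = 0"
    and anorm_triangle: "anorm (x + y) \<le> anorm x + anorm y"
    and anorm_smult: "anorm (sA c x) = cmod c * anorm x"
    and anorm_mult: "anorm (x * y) \<le> anorm x * anorm y"
    and cstar_identity: "anorm (star x * x) = (anorm x)\<^sup>2"
    and complete: "(\<forall>e>0. \<exists>N. \<forall>m\<ge>N. \<forall>n\<ge>N. anorm (X m - X n) < e)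
                   \<Longrightarrow> \<exists>L. (\<lambda>n. anorm (X n - L)) \<longlonglongrightarrow> 0"

definition bounded_op :: "(complex \<Rightarrow> 'h::ab_group_add \<Rightarrow> 'h) \<Rightarrow> ('h \<Rightarrow> 'h \<Rightarrow> complex)
    \<Rightarrow> ('h \<Rightarrow> 'h) \<Rightarrow> bool" where
  "bounded_op sH ip T \<longleftrightarrow>
     (\<forall>x y. T (x + y) = T x + T y) \<and> (\<forall>c x. T (sH c x) = sH c (T x)) \<and>
     (\<exists>K. \<forall>x. hnorm ip (T x) \<le> K * hnorm ip x)"

text \<open>A linear map phi from A to B(H) is completely positive if for every n, the
  amplification phi_n maps positive elements of M_n(A) (= elements of the form Y* Y)
  to positive operators on H^n.\<close>
definition cp_map :: "(complex \<Rightarrow> 'a::{ring, monoid_mult} \<Rightarrow> 'a) \<Rightarrow> ('a \<Rightarrow> 'a)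
    \<Rightarrow> (complex \<Rightarrow> 'h::ab_group_add \<Rightarrow> 'h) \<Rightarrow> ('h \<Rightarrow> 'h \<Rightarrow> complex)
    \<Rightarrow> ('a \<Rightarrow> 'h \<Rightarrow> 'h) \<Rightarrow> bool" where
  "cp_map sA star sH ip \<phi> \<longleftrightarrow>
     (\<forall>a b. \<phi> (a + b) = (\<lambda>h. \<phi> a h + \<phi> b h)) \<and>
     (\<forall>c a. \<phi> (sA c a) = (\<lambda>h. sH c (\<phi> a h))) \<and>
     (\<forall>a. bounded_op sH ip (\<phi> a)) \<and>
     (\<forall>(n::nat) (Y::nat \<Rightarrow> nat \<Rightarrow> 'a) (h::nat \<Rightarrow> 'h).
        let s = (\<Sum>i<n. \<Sum>j<n. ip (h i) (\<phi> (\<Sum>k<n. star (Y k i) * Y k j) (h j)))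
        in Im s = 0 \<and> 0 \<le> Re s)"

text \<open>An instrument is a map on the measurable sets; outside sets M it is fixed to 0
  (extensionality convention).\<close>
definition cp_instrument :: "'x measure \<Rightarrow> (complex \<Rightarrow> 'a::{ring, monoid_mult} \<Rightarrow> 'a)
    \<Rightarrow> ('a \<Rightarrow> 'a) \<Rightarrow> (complex \<Rightarrow> 'h::ab_group_add \<Rightarrow> 'h) \<Rightarrow> ('h \<Rightarrow> 'h \<Rightarrow> complex)
    \<Rightarrow> ('x set \<Rightarrow> 'a \<Rightarrow> 'h \<Rightarrow> 'h) \<Rightarrow> bool" where
  "cp_instrument M sA star sH ip I \<longleftrightarrow>
     (\<forall>A\<in>sets M. cp_map sA star sH ip (I A)) \<and>
     (\<forall>A. A \<notin> sets M \<longrightarrow> I A = (\<lambda>a h. 0)) \<and>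
     (\<forall>a h k F. range F \<subseteq> sets M \<longrightarrow> disjoint_family F \<longrightarrow>
        (\<lambda>n. ip h (I (F n) a k)) sums ip h (I (\<Union>(range F)) a k))"

definition ucp_instruments :: "'x measure \<Rightarrow> (complex \<Rightarrow> 'a::{ring, monoid_mult} \<Rightarrow> 'a)
    \<Rightarrow> ('a \<Rightarrow> 'a) \<Rightarrow> (complex \<Rightarrow> 'h::ab_group_add \<Rightarrow> 'h) \<Rightarrow> ('h \<Rightarrow> 'h \<Rightarrow> complex)
    \<Rightarrow> ('x set \<Rightarrow> 'a \<Rightarrow> 'h \<Rightarrow> 'h) set" where
  "ucp_instruments M sA star sH ip =
     {I. cp_instrument M sA star sH ip I \<and> I (space M) 1 = id}"

definition spectral_instrument :: "'x measure \<Rightarrow> (complex \<Rightarrow> 'a::{ring, monoid_mult} \<Rightarrow> 'a)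
    \<Rightarrow> ('a \<Rightarrow> 'a) \<Rightarrow> (complex \<Rightarrow> 'h::ab_group_add \<Rightarrow> 'h) \<Rightarrow> ('h \<Rightarrow> 'h \<Rightarrow> complex)
    \<Rightarrow> ('x set \<Rightarrow> 'a \<Rightarrow> 'h \<Rightarrow> 'h) \<Rightarrow> bool" where
  "spectral_instrument M sA star sH ip I \<longleftrightarrow>
     I \<in> ucp_instruments M sA star sH ip \<and>
     (\<forall>A\<in>sets M. (\<forall>a b. I A (a * b) = I A a \<circ> I A b) \<and>
                 (\<forall>a h k. ip h (I A (star a) k) = ip (I A a h) k))"

definition extreme_point_instr :: "(complex \<Rightarrow> 'h::ab_group_add \<Rightarrow> 'h)
    \<Rightarrow> ('x set \<Rightarrow> 'a \<Rightarrow> 'h \<Rightarrow> 'h) set \<Rightarrow> ('x set \<Rightarrow> 'a \<Rightarrow> 'h \<Rightarrow> 'h) \<Rightarrow> bool" where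
  "extreme_point_instr sH S I \<longleftrightarrow> I \<in> S \<and>
     (\<forall>I1\<in>S. \<forall>I2\<in>S. \<forall>t::real. 0 < t \<and> t < 1 \<and>
        I = (\<lambda>A a h. sH (complex_of_real t) (I1 A a h) + sH (complex_of_real (1 - t)) (I2 A a h))
        \<longrightarrow> I1 = I \<and> I2 = I)"

end

theory Submission
  imports Defs
begin

context complex_hilbert
begin

lemma ip_zero_right[simp]: "ip x 0 = 0"
  using inner_add_right[of x 0 0] by simp

lemma ip_add_left: "ip (x + y) z = ip x z + ip y z"
  using inner_cnj_sym[of "x+y" z] inner_cnj_sym[of x z] inner_cnj_sym[of y z] inner_add_right[of z x y]
  by simp

lemma ip_smult_left: "ip (sH c x) y = cnj c * ip x y"
  using inner_cnj_sym[of "sH c x" y] inner_cnj_sym[of x y] inner_smult_right[of y c x]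
  by simp

lemma ip_neg_right: "ip x (- y) = - ip x y"
  using inner_add_right[of x y "-y"] by (simp add: eq_neg_iff_add_eq_0 add.commute)

lemma ip_neg_left: "ip (- x) y = - ip x y"
  using inner_cnj_sym[of "-x" y] inner_cnj_sym[of x y] ip_neg_right[of y x] by simp

lemma ip_diff_right: "ip x (y - z) = ip x y - ip x z"
  using inner_add_right[of x y "-z"] ip_neg_right[of x z] by simp

lemma ip_diff_left: "ip (x - y) z = ip x z - ip y z"
  using ip_add_left[of x "-y" z] ip_neg_left[of y z] by simp

lemma ip_self_real: "Im (ip x x) = 0"
  using inner_cnj_sym[of x x] by (metis cnj.simps(2) complex_cnj_cancel_iff
    add.inverse_inverse complex.expand neg_equal_zero)

lemma sH_real_sum: "sH (complex_of_real t) u + sH (complex_of_real (1 - t)) u = u"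
  using sH_add_left[of "complex_of_real t" "complex_of_real (1-t)" u] sH_one[of u]
  by simp

lemma convex_identity:
  "ip (sH (complex_of_real t) u + sH (complex_of_real (1 - t)) v)
      (sH (complex_of_real t) u + sH (complex_of_real (1 - t)) v)
   = t * ip u u + (1 - t) * ip v v - t * (1 - t) * ip (u - v) (u - v)"
  by (simp add: ip_add_left inner_add_right ip_smult_left inner_smult_right
      ip_diff_left ip_diff_right algebra_simps)

end

lemma star_one:
  assumes "unital_cstar_algebra sA star anorm"
  shows "star 1 = 1"
proof -
  interpret unital_cstar_algebra sA star anorm by fact
  have "star (star 1 * 1) = star 1 * star (star 1)" by (rule star_mult)
  then show ?thesis by (simp add: star_star)
qed

lemma star_zero:
  assumes "unital_cstar_algebra sA star anorm"
  shows "star 0 = 0"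
proof -
  interpret unital_cstar_algebra sA star anorm by fact
  have "star (0 + 0) = star 0 + star 0" by (rule star_add)
  then show ?thesis by simp
qed

lemma cp_lin:
  assumes "cp_map sA star sH ip \<psi>"
  shows "\<psi> a (sH c x) = sH c (\<psi> a x)"
  using assms unfolding cp_map_def bounded_op_def by blast

lemma cp_pos1:
  assumes "cp_map sA star sH ip \<psi>"
  shows "Im (ip h (\<psi> (star y * y) h)) = 0 \<and> 0 \<le> Re (ip h (\<psi> (star y * y) h))"
proof -
  show ?thesis
    using assms unfolding cp_map_def
    by (elim conjE) (drule spec[of _ 1], drule spec[of _ "\<lambda>_ _. y"], drule spec[of _ "\<lambda>_. h"], simp add: Let_def)
qed

lemma cp_pos2:
  assumes A: "unital_cstar_algebra sA star anorm" and "cp_map sA star sH ip \<psi>"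
  shows "Im (ip h0 (\<psi> 1 h0) + ip h0 (\<psi> a h1) + ip h1 (\<psi> (star a) h0) + ip h1 (\<psi> (star a * a) h1)) = 0
    \<and> 0 \<le> Re (ip h0 (\<psi> 1 h0) + ip h0 (\<psi> a h1) + ip h1 (\<psi> (star a) h0) + ip h1 (\<psi> (star a * a) h1))"
proof -
  define Y :: "nat \<Rightarrow> nat \<Rightarrow> 'a" where "Y = (\<lambda>k i. if k = 0 then (if i = 0 then 1 else a) else 0)"
  define hh where "hh = (\<lambda>i::nat. if i = 0 then h0 else h1)"
  have "let s = (\<Sum>i<2. \<Sum>j<2. ip (hh i) (\<psi> (\<Sum>k<(2::nat). star (Y k i) * Y k j) (hh j)))
        in Im s = 0 \<and> 0 \<le> Re s"
    using assms(2) unfolding cp_map_def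
    by (elim conjE) (drule spec[of _ 2], drule spec[of _ Y], drule spec[of _ hh], assumption)
  moreover have "(\<Sum>i<2. \<Sum>j<2. ip (hh i) (\<psi> (\<Sum>k<(2::nat). star (Y k i) * Y k j) (hh j)))
     = ip h0 (\<psi> 1 h0) + ip h0 (\<psi> a h1) + ip h1 (\<psi> (star a) h0) + ip h1 (\<psi> (star a * a) h1)"
    by (simp add: numeral_2_eq_2 Y_def hh_def star_one[OF A] star_zero[OF A] add.assoc)
  ultimately show ?thesis by (simp add: Let_def)
qed

lemma kadison_schwarz:
  assumes A: "unital_cstar_algebra sA star anorm" and H: "complex_hilbert sH ip"
    and C: "cp_map sA star sH ip \<psi>"
    and U: "Re (ip (\<psi> a h) (\<psi> 1 (\<psi> a h))) \<le> Re (ip (\<psi> a h) (\<psi> a h))"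
  shows "Re (ip (\<psi> a h) (\<psi> a h)) \<le> Re (ip h (\<psi> (star a * a) h))"
proof -
  interpret complex_hilbert sH ip by fact
  define u where "u = \<psi> a h"
  define p where "p = ip u (\<psi> 1 u)"
  define w where "w = ip h (\<psi> (star a) u)"
  define q where "q = ip h (\<psi> (star a * a) h)"
  define N where "N = ip u u"
  have p: "Im p = 0" using cp_pos1[OF C, of u 1] star_one[OF A] unfolding p_def by simp
  have q: "Im q = 0" using cp_pos1[OF C, of h a] unfolding q_def by simp
  have Nr: "Im N = 0" unfolding N_def by (rule ip_self_real)
  have e1: "Im (p - N - w + q) = 0 \<and> 0 \<le> Re (p - N - w + q)"
    using cp_pos2[OF A C, of "sH (-1) u" a h]
    by (simp add: ip_smult_left inner_smult_right cp_lin[OF C] u_def[symmetric] p_def w_def q_def N_def)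
  have e2: "Im (p + \<i> * N - \<i> * w + q) = 0"
    using cp_pos2[OF A C, of "sH (-\<i>) u" a h]
    by (simp add: ip_smult_left inner_smult_right cp_lin[OF C] u_def[symmetric] p_def w_def q_def N_def)
  have "Re w = Re N" using e2 p q Nr by simp
  moreover have "Re p \<le> Re N" using U unfolding p_def N_def u_def .
  ultimately show ?thesis using e1 unfolding u_def[symmetric] q_def[symmetric] N_def[symmetric] by simp
qed


lemma instr_empty:
  assumes "cp_instrument M sA star sH ip J"
  shows "ip h (J {} a k) = 0"
proof -
  have "(\<lambda>n::nat. ip h (J ((\<lambda>_. {}) n) a k)) sums ip h (J (\<Union>(range (\<lambda>_::nat. {}))) a k)"
    using assms unfolding cp_instrument_def
    by (elim conjE) (drule spec[of _ a], drule spec[of _ h], drule spec[of _ k],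
        drule spec[of _ "\<lambda>_::nat. {}"], simp add: disjoint_family_on_def)
  then have "(\<lambda>n::nat. ip h (J {} a k)) sums ip h (J {} a k)" by simp
  then have "(\<lambda>n::nat. ip h (J {} a k)) \<longlonglongrightarrow> 0"
    using sums_summable summable_LIMSEQ_zero by blast
  then show ?thesis using LIMSEQ_unique tendsto_const by blast
qed

lemma instr_add:
  assumes J: "cp_instrument M sA star sH ip J" and "A \<in> sets M" "B \<in> sets M" "A \<inter> B = {}"
  shows "ip h (J (A \<union> B) a k) = ip h (J A a k) + ip h (J B a k)"
proof -
  define F where "F = (\<lambda>n::nat. if n = 0 then A else if n = 1 then B else {})"
  have r: "range F \<subseteq> sets M" using assms unfolding F_def by auto
  have d: "disjoint_family F" using assms(4) unfolding F_def disjoint_family_on_def by auto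
  have u: "\<Union>(range F) = A \<union> B"
  proof
    show "\<Union>(range F) \<subseteq> A \<union> B" unfolding F_def by auto
    show "A \<union> B \<subseteq> \<Union>(range F)"
      using rangeI[of F 0] rangeI[of F 1] unfolding F_def by auto
  qed
  have "(\<lambda>n. ip h (J (F n) a k)) sums ip h (J (\<Union>(range F)) a k)"
    using J r d unfolding cp_instrument_def by blast
  then have s1: "(\<lambda>n. ip h (J (F n) a k)) sums ip h (J (A \<union> B) a k)" using u by simp
  have "(\<lambda>n. ip h (J (F n) a k)) sums (\<Sum>n\<in>{0,1}. ip h (J (F n) a k))"
    by (rule sums_finite) (auto simp: F_def instr_empty[OF J])
  then have "(\<lambda>n. ip h (J (F n) a k)) sums (ip h (J A a k) + ip h (J B a k))"
    by (simp add: F_def)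
  then show ?thesis using s1 sums_unique2 by blast
qed

theorem corollary3p2:
  fixes M :: "'x measure"
    and sA :: "complex \<Rightarrow> 'a::{ring, monoid_mult} \<Rightarrow> 'a"
    and star :: "'a \<Rightarrow> 'a"
    and anorm :: "'a \<Rightarrow> real"
    and sH :: "complex \<Rightarrow> 'h::ab_group_add \<Rightarrow> 'h"
    and ip :: "'h \<Rightarrow> 'h \<Rightarrow> complex"
    and I :: "'x set \<Rightarrow> 'a \<Rightarrow> 'h \<Rightarrow> 'h"
  assumes "unital_cstar_algebra sA star anorm"
    and "complex_hilbert sH ip"
    and "spectral_instrument M sA star sH ip I"
  shows "extreme_point_instr sH (ucp_instruments M sA star sH ip) I"
proof -
  note A = assms(1) and H = assms(2)
  interpret complex_hilbert sH ip by fact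
  have Iu: "I \<in> ucp_instruments M sA star sH ip"
    using assms(3) unfolding spectral_instrument_def by blast
  have Icp: "cp_instrument M sA star sH ip I" using Iu unfolding ucp_instruments_def by blast
  have mult: "\<And>B a b. B \<in> sets M \<Longrightarrow> I B (a * b) = I B a \<circ> I B b"
    using assms(3) unfolding spectral_instrument_def by blast
  have stars: "\<And>B a h k. B \<in> sets M \<Longrightarrow> ip h (I B (star a) k) = ip (I B a h) k"
    using assms(3) unfolding spectral_instrument_def by blast
  have bound: "Re (ip x (J B 1 x)) \<le> Re (ip x x)"
    if J: "J \<in> ucp_instruments M sA star sH ip" and B: "B \<in> sets M" for J B x
  proof -
    have Jc: "cp_instrument M sA star sH ip J" and J1: "J (space M) 1 = id"
      using J unfolding ucp_instruments_def by auto
    have C: "space M - B \<in> sets M" using B by auto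
    have sp: "B \<union> (space M - B) = space M" using B sets.sets_into_space by blast
    have "ip x (J (space M) 1 x) = ip x (J B 1 x) + ip x (J (space M - B) 1 x)"
      using instr_add[OF Jc B C, of x 1 x] sp by simp
    moreover have "0 \<le> Re (ip x (J (space M - B) 1 x))"
      using cp_pos1[of sA star sH ip "J (space M - B)" x 1] Jc C star_one[OF A]
      unfolding cp_instrument_def by auto
    ultimately show ?thesis using J1 by simp
  qed
  have key: "I1 B a h = I B a h"
    if J1: "I1 \<in> ucp_instruments M sA star sH ip" and J2: "I2 \<in> ucp_instruments M sA star sH ip"
      and t: "0 < t" "t < 1"
      and eq: "I = (\<lambda>A a h. sH (complex_of_real t) (I1 A a h) + sH (complex_of_real (1 - t)) (I2 A a h))"
    for I1 I2 t B a h
  proof (cases "B \<in> sets M")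
    case False
    have "I1 B = (\<lambda>a h. 0)" "I B = (\<lambda>a h. 0)"
      using J1 Icp False unfolding ucp_instruments_def cp_instrument_def by auto
    then show ?thesis by simp
  next
    case True
    have c1: "cp_map sA star sH ip (I1 B)" and c2: "cp_map sA star sH ip (I2 B)"
      using J1 J2 True unfolding ucp_instruments_def cp_instrument_def by auto
    define u where "u = I1 B a h"
    define v where "v = I2 B a h"
    have ks1: "Re (ip u u) \<le> Re (ip h (I1 B (star a * a) h))"
    proof -
      have "Re (ip (I1 B a h) (I1 B 1 (I1 B a h))) \<le> Re (ip (I1 B a h) (I1 B a h))"
        by (rule bound[OF J1 True])
      then show ?thesis unfolding u_def by (rule kadison_schwarz[OF A H c1])
    qed
    have ks2: "Re (ip v v) \<le> Re (ip h (I2 B (star a * a) h))"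
    proof -
      have "Re (ip (I2 B a h) (I2 B 1 (I2 B a h))) \<le> Re (ip (I2 B a h) (I2 B a h))"
        by (rule bound[OF J2 True])
      then show ?thesis unfolding v_def by (rule kadison_schwarz[OF A H c2])
    qed
    have Iah: "I B a h = sH (complex_of_real t) u + sH (complex_of_real (1 - t)) v"
      unfolding u_def v_def by (subst eq) simp
    have "ip h (I B (star a * a) h) = t * ip h (I1 B (star a * a) h) + (1 - t) * ip h (I2 B (star a * a) h)"
      by (subst eq) (simp add: inner_add_right inner_smult_right)
    moreover have "ip h (I B (star a * a) h) = ip (I B a h) (I B a h)"
      using mult[OF True, of "star a" a] stars[OF True] by simp
    ultimately have ceq: "t * ip u u + (1 - t) * ip v v - t * (1 - t) * ip (u - v) (u - v)
       = t * ip h (I1 B (star a * a) h) + (1 - t) * ip h (I2 B (star a * a) h)"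
      using Iah convex_identity by simp
    have "t * Re (ip u u) + (1 - t) * Re (ip v v) - t * (1 - t) * Re (ip (u - v) (u - v))
       = t * Re (ip h (I1 B (star a * a) h)) + (1 - t) * Re (ip h (I2 B (star a * a) h))"
      using arg_cong[where f=Re, OF ceq] by simp
    moreover have "t * Re (ip u u) \<le> t * Re (ip h (I1 B (star a * a) h))"
      using ks1 t by simp
    moreover have "(1 - t) * Re (ip v v) \<le> (1 - t) * Re (ip h (I2 B (star a * a) h))"
      using ks2 t by simp
    ultimately have "t * (1 - t) * Re (ip (u - v) (u - v)) \<le> 0" by linarith
    moreover have "0 < t * (1 - t)" using t by simp
    ultimately have "Re (ip (u - v) (u - v)) \<le> 0"
      using t by (simp add: mult_le_0_iff)
    then have "Re (ip (u - v) (u - v)) = 0" using inner_self_nonneg[of "u - v"] by linarith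
    then have "ip (u - v) (u - v) = 0" using ip_self_real[of "u - v"] complex_eqI by force
    then have "u = v" using inner_self_zero by force
    then show ?thesis using Iah sH_real_sum unfolding u_def by simp
  qed
  show ?thesis
    unfolding extreme_point_instr_def
  proof (intro conjI Iu ballI allI impI)
    fix I1 I2 t
    assume J1: "I1 \<in> ucp_instruments M sA star sH ip" and J2: "I2 \<in> ucp_instruments M sA star sH ip"
      and h: "0 < t \<and> t < 1 \<and>
        I = (\<lambda>A a h. sH (complex_of_real t) (I1 A a h) + sH (complex_of_real (1 - t)) (I2 A a h))"
    then have t: "0 < t" "t < 1" and eq: "I = (\<lambda>A a h. sH (complex_of_real t) (I1 A a h) + sH (complex_of_real (1 - t)) (I2 A a h))"
      by auto
    have e1: "I1 = I" using key[OF J1 J2 t eq] by blast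
    have eq2: "I = (\<lambda>A a h. sH (complex_of_real (1 - t)) (I2 A a h) + sH (complex_of_real (1 - (1 - t))) (I1 A a h))"
      using eq by (simp add: add.commute)
    have e2: "I2 = I" using key[OF J2 J1 _ _ eq2] t by (auto intro!: ext)
    show "I1 = I" "I2 = I" using e1 e2 by simp_all
  qed
qed

end
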